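(* Let $G$ be a simple complex Lie group with Lie algebra $\mathfrak g$, $\rho\colon G\to\mathrm{GL}(V)$ a faithful irreducible finite-dimensional complex representation with differential $\rho_*$, $T$ a maximal torus of $G$ with Lie algebra $\mathfrak t$. Suppose $g\in T$ and $x\in\mathfrak t$ satisfy $\rho(g)=\rho_*(x)$ in $\mathrm{End}(V)$. Let $e_1,\dots,e_n$ be a basis of $V$ of $T$-weight vectors with characters $\chi_1,\dots,\chi_n\in X^*(T)$. If $\chi_i\chi_j=\chi_k\chi_l$ for four of these characters, then, as polynomials in $z$, $$(z-\chi_i(g))(z-\chi_j(g))=(z-\chi_k(g))(z-\chi_l(g)).$$
   Context: Each character $\chi\in X^*(T)$ is identified with the linear form $t^*\in\mathfrak t^*$ satisfying $\chi(\exp(y))=\exp(t^*(y))$ for all $y\in\mathfrak t$. *)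

theory Defs
  imports "HOL-Analysis.Analysis" "HOL-Computational_Algebra.Polynomial"
begin

text \<open>Model of a complex torus T of rank CARD('r): T = (C^*)^r inside complex^'r,
  with Lie algebra t = complex^'r and exponential map applied componentwise.\<close>

definition torus :: "(complex ^ 'r) set" where
  "torus = {t. \<forall>a. t $ a \<noteq> 0}"

definition texp :: "complex ^ 'r \<Rightarrow> complex ^ 'r" where
  "texp y = (\<chi> a. exp (y $ a))"

text \<open>Characters of T: X^*(T) = Z^r, the character with exponent vector w.\<close>

definition character :: "int ^ 'r \<Rightarrow> complex ^ 'r \<Rightarrow> complex" where
  "character w t = (\<Prod>a\<in>UNIV. (t $ a) powi (w $ a))"

text \<open>The linear form on t identified with the character w
  (character w (texp y) = exp (char_form w y)).\<close>

definition char_form :: "int ^ 'r \<Rightarrow> complex ^ 'r \<Rightarrow> complex" where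
  "char_form w y = (\<Sum>a\<in>UNIV. of_int (w $ a) * y $ a)"

end

theory Submission
  imports Defs
begin

lemma texp_torus: "texp y \<in> torus"
  by (simp add: torus_def texp_def)

lemma char_texp: "character w (texp y) = exp (char_form w y)"
  by (simp add: character_def texp_def char_form_def exp_power_int exp_sum)

lemma char_form_scale: "char_form w (c *s y) = c * char_form w y"
  by (simp add: char_form_def sum_distrib_left algebra_simps)

lemma column_nonzero:
  fixes E :: "complex ^ 'n ^ 'n"
  assumes "invertible E"
  shows "\<exists>a. column m E $ a \<noteq> 0"
proof (rule ccontr)
  assume "\<not> ?thesis"
  hence z: "\<And>a. E $ a $ m = 0" by (simp add: column_def)
  have "E *v axis m 1 = 0"
  proof -
    have "\<And>a. (\<Sum>b\<in>UNIV. E $ a $ b * axis m 1 $ b) = E $ a $ m"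
      by (simp add: axis_def if_distrib cong: if_cong)
    thus ?thesis using z by (simp add: matrix_vector_mult_def vec_eq_iff)
  qed
  moreover obtain B where "B ** E = mat 1" using assms invertible_left_inverse by blast
  ultimately have "axis m (1::complex) = 0"
    by (metis matrix_vector_mul_assoc matrix_vector_mul_lid matrix_vector_mult_0_right)
  thus False by (simp add: axis_eq_0_iff)
qed

lemma bl_comp: "bounded_linear (\<lambda>M::complex^'n^'n. (M *v c) $ a)"
proof -
  have "linear (\<lambda>M::complex^'n^'n. (M *v c) $ a)"
    by (rule linearI) (simp_all add: matrix_vector_mult_def sum.distrib sum_distrib_left algebra_simps vector_scaleR_component, simp add: scaleR_conv_of_real sum_distrib_left algebra_simps)
  thus ?thesis by (simp add: linear_conv_bounded_linear)
qed

lemma exp_deriv: "((\<lambda>s::real. exp (of_real s * L) * (c::complex)) has_vector_derivative (L * c)) (at 0)"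
proof -
  have "((\<lambda>z. exp (z * L) * c) has_field_derivative (L * c)) (at (of_real 0))"
    by (auto intro!: derivative_eq_intros)
  thus ?thesis by (rule has_vector_derivative_real_field)
qed

theorem lemma3:
  fixes \<rho> :: "complex ^ 'r \<Rightarrow> complex ^ 'n ^ 'n"
    and \<rho>\<^sub>s :: "complex ^ 'r \<Rightarrow> complex ^ 'n ^ 'n"
    and E :: "complex ^ 'n ^ 'n"
    and w :: "'n \<Rightarrow> int ^ 'r"
    and g x :: "complex ^ 'r"
    and i j k l :: 'n
  assumes hom: "\<forall>s\<in>torus. \<forall>t\<in>torus. \<rho> (s * t) = \<rho> s ** \<rho> t"
    and unit: "\<rho> 1 = mat 1"
    and basis: "invertible E"
    and weight: "\<forall>t\<in>torus. \<forall>m. \<rho> t *v column m E = character (w m) t *s column m E"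
    and diff: "\<forall>y. ((\<lambda>s::real. \<rho> (texp (of_real s *s y))) has_vector_derivative \<rho>\<^sub>s y) (at 0)"
    and g: "g \<in> torus"
    and eq: "\<rho> g = \<rho>\<^sub>s x"
    and chars: "\<forall>t\<in>torus. character (w i) t * character (w j) t
                          = character (w k) t * character (w l) t"
  shows "[:- character (w i) g, 1:] * [:- character (w j) g, 1:]
       = [:- character (w k) g, 1:] * [:- character (w l) g, 1:]"
proof -
  have ev: "character (w m) g = char_form (w m) x" for m
  proof -
    obtain a where a: "column m E $ a \<noteq> 0" using column_nonzero[OF basis] by blast
    let ?c = "column m E"
    have d1: "((\<lambda>s::real. (\<rho> (texp (of_real s *s x)) *v ?c) $ a) has_vector_derivative (\<rho>\<^sub>s x *v ?c) $ a) (at 0)"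
      using bounded_linear.has_vector_derivative[OF bl_comp diff[rule_format, of x]] .
    have "(\<rho> (texp (of_real s *s x)) *v ?c) $ a = exp (of_real s * char_form (w m) x) * ?c $ a" for s :: real
    proof -
      have "\<rho> (texp (of_real s *s x)) *v ?c = character (w m) (texp (of_real s *s x)) *s ?c"
        using weight texp_torus by blast
      thus ?thesis by (simp add: char_texp char_form_scale)
    qed
    hence d2: "((\<lambda>s::real. (\<rho> (texp (of_real s *s x)) *v ?c) $ a) has_vector_derivative char_form (w m) x * ?c $ a) (at 0)"
      using exp_deriv by simp
    have "(\<rho>\<^sub>s x *v ?c) $ a = char_form (w m) x * ?c $ a"
      using vector_derivative_unique_at[OF d1 d2] .
    moreover have "(\<rho>\<^sub>s x *v ?c) $ a = character (w m) g * ?c $ a"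
    proof -
      have "\<rho> g *v ?c = character (w m) g *s ?c" using weight g by blast
      thus ?thesis using eq by simp
    qed
    ultimately show ?thesis using a by simp
  qed
  let ?A = "char_form (w i) x + char_form (w j) x" and ?B = "char_form (w k) x + char_form (w l) x"
  have "exp (of_real s * ?A) * 1 = exp (of_real s * ?B) * 1" for s :: real
    using chars[rule_format, OF texp_torus[of "of_real s *s x"]]
    by (simp add: char_texp char_form_scale distrib_left exp_add)
  hence "((\<lambda>s::real. exp (of_real s * ?A) * 1) has_vector_derivative ?B * 1) (at 0)"
    using exp_deriv[of ?B 1] by simp
  hence sum: "?A = ?B" using vector_derivative_unique_at[OF exp_deriv[of ?A 1]] by simp
  have prod: "character (w i) g * character (w j) g = character (w k) g * character (w l) g"
    using chars g by blast
  show ?thesis using sum prod by (simp add: ev algebra_simps)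
qed

end
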